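(* Let $t(x_1,\dots,x_n)$ be a term in the language of strong quasi-MV* algebras containing at least one occurrence of $\oplus$. Then for all $\langle a_1,b_1\rangle,\dots,\langle a_n,b_n\rangle\in S^*$, $$t^{\mathbf{S^*}}(\langle a_1,b_1\rangle,\dots,\langle a_n,b_n\rangle)=t^{\mathbf{S^*}}(\langle a_1,0\rangle,\dots,\langle a_n,0\rangle)=\langle z,0\rangle$$ for some $z\in[-1,1]$.
   Context: Terms in the language of strong quasi-MV* algebras are built from variables and constants $0,1$ using a binary operation $\oplus$ and unary operations $-,{}^+,{}^-$. $\mathbf{S^*}$ is the algebra with universe $S^*=[-1,1]\times[-1,1]\subseteq\mathbb{R}^2$ and operations $\langle a,b\rangle\oplus\langle c,d\rangle=\langle\max\{-1,\min\{1,a+c\}\},0\rangle$, $-\langle a,b\rangle=\langle -a,-b\rangle$, $\langle a,b\rangle^+=\langle\max\{0,a\},0\rangle$, $\langle a,b\rangle^-=\langle\min\{0,a\},0\rangle$, $0=\langle 0,0\rangle$, $1=\langle 1,0\rangle$; $t^{\mathbf{S^*}}$ denotes the term function of $t$ on $\mathbf{S^*}$. *)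

theory Defs
  imports Main "HOL.Real"
begin

datatype sqmv_term =
    Var nat
  | Zero
  | One
  | Oplus sqmv_term sqmv_term
  | Neg sqmv_term
  | Pos_part sqmv_term
  | Neg_part sqmv_term

definition Sstar :: "(real \<times> real) set" where
  "Sstar = {-1..1} \<times> {-1..1}"

definition S_oplus :: "real \<times> real \<Rightarrow> real \<times> real \<Rightarrow> real \<times> real" where
  "S_oplus x y = (max (-1) (min 1 (fst x + fst y)), 0)"

definition S_neg :: "real \<times> real \<Rightarrow> real \<times> real" where
  "S_neg x = (- fst x, - snd x)"

definition S_pos :: "real \<times> real \<Rightarrow> real \<times> real" where
  "S_pos x = (max 0 (fst x), 0)"

definition S_negp :: "real \<times> real \<Rightarrow> real \<times> real" where
  "S_negp x = (min 0 (fst x), 0)"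

fun eval_S :: "(nat \<Rightarrow> real \<times> real) \<Rightarrow> sqmv_term \<Rightarrow> real \<times> real" where
  "eval_S env (Var i) = env i"
| "eval_S env Zero = (0, 0)"
| "eval_S env One = (1, 0)"
| "eval_S env (Oplus s t) = S_oplus (eval_S env s) (eval_S env t)"
| "eval_S env (Neg s) = S_neg (eval_S env s)"
| "eval_S env (Pos_part s) = S_pos (eval_S env s)"
| "eval_S env (Neg_part s) = S_negp (eval_S env s)"

fun term_vars :: "sqmv_term \<Rightarrow> nat set" where
  "term_vars (Var i) = {i}"
| "term_vars Zero = {}"
| "term_vars One = {}"
| "term_vars (Oplus s t) = term_vars s \<union> term_vars t"
| "term_vars (Neg s) = term_vars s"
| "term_vars (Pos_part s) = term_vars s"
| "term_vars (Neg_part s) = term_vars s"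

fun has_oplus :: "sqmv_term \<Rightarrow> bool" where
  "has_oplus (Var i) = False"
| "has_oplus Zero = False"
| "has_oplus One = False"
| "has_oplus (Oplus s t) = True"
| "has_oplus (Neg s) = has_oplus s"
| "has_oplus (Pos_part s) = has_oplus s"
| "has_oplus (Neg_part s) = has_oplus s"

end

theory Submission
  imports Defs
begin

lemma l1: "fst (eval_S env t) = fst (eval_S (\<lambda>i. (fst (env i), 0)) t)"
  by (induction t) (auto simp: S_oplus_def S_neg_def S_pos_def S_negp_def)

lemma l2: "term_vars t \<subseteq> {..<n} \<Longrightarrow> \<forall>i<n. env i \<in> Sstar \<Longrightarrow>
  -1 \<le> fst (eval_S env t) \<and> fst (eval_S env t) \<le> 1 \<and> -1 \<le> snd (eval_S env t) \<and> snd (eval_S env t) \<le> 1"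
proof (induction t)
  case (Var i)
  then have "env i \<in> Sstar" by auto
  then show ?case by (cases "env i") (simp add: Sstar_def)
qed (simp_all add: S_oplus_def S_neg_def S_pos_def S_negp_def)

lemma l3: "has_oplus t \<Longrightarrow> snd (eval_S env t) = 0"
  by (induction t) (auto simp: S_oplus_def S_neg_def S_pos_def S_negp_def)

theorem lemma3p4:
  fixes t :: sqmv_term and n :: nat and env :: "nat \<Rightarrow> real \<times> real"
  assumes "term_vars t \<subseteq> {..<n}"
    and "has_oplus t"
    and "\<forall>i<n. env i \<in> Sstar"
  shows "eval_S env t = eval_S (\<lambda>i. (fst (env i), 0)) t
         \<and> (\<exists>z\<in>{-1..1}. eval_S env t = (z, 0))"
proof -
  have a: "eval_S env t = eval_S (\<lambda>i. (fst (env i), 0)) t"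
    using l1[of env t] l3[OF assms(2), of env] l3[OF assms(2), of "\<lambda>i. (fst (env i), 0)"]
    by (simp add: prod_eq_iff)
  have "fst (eval_S env t) \<in> {-1..1}" using l2[OF assms(1) assms(3)] by simp
  moreover have "eval_S env t = (fst (eval_S env t), 0)"
    using l3[OF assms(2), of env] by (simp add: prod_eq_iff)
  ultimately show ?thesis using a by blast
qed

end
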